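(* Let $a\ge b\ge1$ be integers with either $b\ge2$, or $b=1$ and $a\ge5$, and $A=\begin{pmatrix}2&-a\\-b&2\end{pmatrix}$. Then every $\pi$-system $\Sigma\subseteq\Delta_{\mathrm{re}}$ of $\mathfrak g(A)$ with $|\Sigma|>1$ is either of the form $\{\beta_1^j,\beta_2^k\}$ or $\{-\beta_1^j,-\beta_2^k\}$ where $\{\beta_1^j,\beta_2^k\}$ is a $\pi$-system (for $b=1$, $a\ge5$ this means $(j,k)\ne(1,0)$), or of the form $\Sigma=\{\beta_i^j,-\beta_i^k\}$ for some $j,k\in\mathbb Z_+$ and $i\in\{1,2\}$. In particular $|\Sigma|\le2$, and $\Sigma$ is linearly independent unless $\Sigma=\{\alpha,-\alpha\}$ for some $\alpha\in\Delta^+_{\mathrm{re}}$. Conversely, if $b\ge2$, then $\{\beta_i^j,-\beta_i^k\}$ is a $\pi$-system for all $j,k\in\mathbb Z_+$ and $i=1,2$; if $b=1$ and $a\ge5$, then $\{\beta_i^j,-\beta_i^k\}$ is a $\pi$-system if and only if $\{j,k\}\ne\{s,s+2\}$ for every $s\in\mathbb Z_+$ with $s\equiv i\pmod 2$.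
   Context: Let $\mathfrak g(A)$ be the Kac–Moody algebra with simple roots $\alpha_1,\alpha_2$, root system $\Delta$, real roots $\Delta_{\mathrm{re}}$, positive real roots $\Delta^+_{\mathrm{re}}$. $\mathbb Z_+=\{0,1,2,\dots\}$. Define $c_0=d_0=0$, $c_1=d_1=1$, $c_{k+2}+c_k=a d_{k+1}$, $d_{k+2}+d_k=b c_{k+1}$, and $\beta_1^j=c_j\alpha_1+d_{j+1}\alpha_2$, $\beta_2^j=c_{j+1}\alpha_1+d_j\alpha_2$ ($j\in\mathbb Z_+$); then $\Delta^+_{\mathrm{re}}=\{\beta_1^j,\beta_2^j\}$. A subset $\Sigma\subseteq\Delta_{\mathrm{re}}$ is a $\pi$-system if $\alpha-\beta\notin\Delta$ for all $\alpha,\beta\in\Sigma$. *)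

theory Defs
  imports "HOL-Analysis.Analysis"
begin

text \<open>Rank-2 Kac-Moody algebra with Cartan matrix A = [[2,-a],[-b,2]].
  An element x*alpha1 + y*alpha2 of the root lattice Q is the pair (x,y) :: int * int.\<close>

definition rneg :: "int \<times> int \<Rightarrow> int \<times> int" where
  "rneg v = (- fst v, - snd v)"

definition rsub :: "int \<times> int \<Rightarrow> int \<times> int \<Rightarrow> int \<times> int" where
  "rsub v w = (fst v - fst w, snd v - snd w)"

text \<open>Pairings with the simple coroots: a_ij = <alpha_j, alpha_i^vee>.\<close>
definition cop1 :: "int \<Rightarrow> int \<Rightarrow> int \<times> int \<Rightarrow> int" where
  "cop1 a b v = 2 * fst v - a * snd v"

definition cop2 :: "int \<Rightarrow> int \<Rightarrow> int \<times> int \<Rightarrow> int" where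
  "cop2 a b v = - b * fst v + 2 * snd v"

definition refl1 :: "int \<Rightarrow> int \<Rightarrow> int \<times> int \<Rightarrow> int \<times> int" where
  "refl1 a b v = (fst v - cop1 a b v, snd v)"

definition refl2 :: "int \<Rightarrow> int \<Rightarrow> int \<times> int \<Rightarrow> int \<times> int" where
  "refl2 a b v = (fst v, snd v - cop2 a b v)"

inductive_set Worbit :: "int \<Rightarrow> int \<Rightarrow> (int \<times> int) set \<Rightarrow> (int \<times> int) set"
  for a b :: int and S :: "(int \<times> int) set" where
  base: "v \<in> S \<Longrightarrow> v \<in> Worbit a b S"
| step1: "v \<in> Worbit a b S \<Longrightarrow> refl1 a b v \<in> Worbit a b S"
| step2: "v \<in> Worbit a b S \<Longrightarrow> refl2 a b v \<in> Worbit a b S"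

definition real_roots :: "int \<Rightarrow> int \<Rightarrow> (int \<times> int) set" where
  "real_roots a b = Worbit a b {(1,0), (0,1)}"

definition positive_real_roots :: "int \<Rightarrow> int \<Rightarrow> (int \<times> int) set" where
  "positive_real_roots a b = {v \<in> real_roots a b. fst v \<ge> 0 \<and> snd v \<ge> 0}"

text \<open>Kac's fundamental set K: nonzero alpha in Q_+ with connected support
  (automatic in rank 2 with a, b >= 1) and <alpha, alpha_i^vee> <= 0 for i = 1,2.\<close>
definition fund_set :: "int \<Rightarrow> int \<Rightarrow> (int \<times> int) set" where
  "fund_set a b = {v. fst v \<ge> 0 \<and> snd v \<ge> 0 \<and> v \<noteq> (0,0)
                     \<and> cop1 a b v \<le> 0 \<and> cop2 a b v \<le> 0}"

text \<open>Imaginary roots (Kac, Thm 5.4): Delta_im^+ = W K, Delta_im = Delta_im^+ \<union> -Delta_im^+.\<close>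
definition imag_roots :: "int \<Rightarrow> int \<Rightarrow> (int \<times> int) set" where
  "imag_roots a b = Worbit a b (fund_set a b) \<union> rneg ` Worbit a b (fund_set a b)"

definition roots :: "int \<Rightarrow> int \<Rightarrow> (int \<times> int) set" where
  "roots a b = real_roots a b \<union> imag_roots a b"

definition pi_system :: "int \<Rightarrow> int \<Rightarrow> (int \<times> int) set \<Rightarrow> bool" where
  "pi_system a b S \<longleftrightarrow> S \<subseteq> real_roots a b \<and>
     (\<forall>v\<in>S. \<forall>w\<in>S. rsub v w \<notin> roots a b)"

fun cd :: "int \<Rightarrow> int \<Rightarrow> nat \<Rightarrow> int \<times> int" where
  "cd a b 0 = (0, 0)"
| "cd a b (Suc 0) = (1, 1)"
| "cd a b (Suc (Suc k)) =
     (a * snd (cd a b (Suc k)) - fst (cd a b k), b * fst (cd a b (Suc k)) - snd (cd a b k))"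

definition cc :: "int \<Rightarrow> int \<Rightarrow> nat \<Rightarrow> int" where "cc a b k = fst (cd a b k)"
definition dd :: "int \<Rightarrow> int \<Rightarrow> nat \<Rightarrow> int" where "dd a b k = snd (cd a b k)"

definition beta :: "int \<Rightarrow> int \<Rightarrow> nat \<Rightarrow> nat \<Rightarrow> int \<times> int" where
  "beta a b i j = (if i = 1 then (cc a b j, dd a b (j+1)) else (cc a b (j+1), dd a b j))"

text \<open>Linear independence over the reals (equivalently over Q) of a set of lattice vectors.\<close>
definition lin_indep :: "(int \<times> int) set \<Rightarrow> bool" where
  "lin_indep S \<longleftrightarrow>
     independent ((\<lambda>v. (real_of_int (fst v), real_of_int (snd v))) ` S)"

end

theory Submission
  imports Defs
begin


definition Qf :: "int \<Rightarrow> int \<Rightarrow> int \<times> int \<Rightarrow> int" where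
  "Qf a b v = b * (fst v)^2 - a * b * fst v * snd v + a * (snd v)^2"

lemma refl1_eq: "refl1 a b (x, y) = (a*y - x, y)"
  by (simp add: refl1_def cop1_def)
lemma refl2_eq: "refl2 a b (x, y) = (x, b*x - y)"
  by (simp add: refl2_def cop2_def)
lemma rneg_eq: "rneg (x, y) = (-x, -y)" by (simp add: rneg_def)
lemma rsub_eq: "rsub (x, y) (u, v) = (x - u, y - v)" by (simp add: rsub_def)

lemma refl1_invol[simp]: "refl1 a b (refl1 a b v) = v"
  by (cases v) (simp add: refl1_eq)
lemma refl2_invol[simp]: "refl2 a b (refl2 a b v) = v"
  by (cases v) (simp add: refl2_eq)
lemma rneg_invol[simp]: "rneg (rneg v) = v"
  by (cases v) (simp add: rneg_eq)
lemma refl1_rneg: "refl1 a b (rneg v) = rneg (refl1 a b v)"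
  by (cases v) (simp add: refl1_eq rneg_eq)
lemma refl2_rneg: "refl2 a b (rneg v) = rneg (refl2 a b v)"
  by (cases v) (simp add: refl2_eq rneg_eq)
lemma refl1_rsub: "refl1 a b (rsub v w) = rsub (refl1 a b v) (refl1 a b w)"
  by (cases v; cases w) (simp add: refl1_eq rsub_eq algebra_simps)
lemma refl2_rsub: "refl2 a b (rsub v w) = rsub (refl2 a b v) (refl2 a b w)"
  by (cases v; cases w) (simp add: refl2_eq rsub_eq algebra_simps)
lemma rneg_rsub: "rneg (rsub v w) = rsub w v"
  by (cases v; cases w) (simp add: rneg_eq rsub_eq)
lemma rsub_rneg_comm: "rsub v (rneg w) = rsub w (rneg v)"
  by (cases v; cases w) (simp add: rneg_eq rsub_eq)
lemma rsub_rneg_left: "rsub (rneg v) w = rneg (rsub v (rneg w))"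
  by (cases v; cases w) (simp add: rneg_eq rsub_eq)
lemma rsub_rneg_rneg: "rsub (rneg v) (rneg w) = rneg (rsub v w)"
  by (cases v; cases w) (simp add: rneg_eq rsub_eq)
lemma rneg_inj[simp]: "rneg v = rneg w \<longleftrightarrow> v = w"
  by (metis rneg_invol)

lemma Qf_refl1[simp]: "Qf a b (refl1 a b v) = Qf a b v"
  by (cases v) (simp add: refl1_eq Qf_def power2_eq_square algebra_simps)
lemma Qf_refl2[simp]: "Qf a b (refl2 a b v) = Qf a b v"
  by (cases v) (simp add: refl2_eq Qf_def power2_eq_square algebra_simps)
lemma Qf_rneg[simp]: "Qf a b (rneg v) = Qf a b v"
  by (cases v) (simp add: rneg_eq Qf_def power2_eq_square algebra_simps)

lemma Worbit_refl1_iff[simp]: "refl1 a b v \<in> Worbit a b S \<longleftrightarrow> v \<in> Worbit a b S"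
  by (metis Worbit.step1 refl1_invol)
lemma Worbit_refl2_iff[simp]: "refl2 a b v \<in> Worbit a b S \<longleftrightarrow> v \<in> Worbit a b S"
  by (metis Worbit.step2 refl2_invol)

lemma mem_rneg_image: "v \<in> rneg ` A \<longleftrightarrow> rneg v \<in> A"
  by (metis image_iff rneg_invol)

lemma real_rneg: "v \<in> real_roots a b \<Longrightarrow> rneg v \<in> real_roots a b"
  unfolding real_roots_def
proof (induction rule: Worbit.induct)
  case (base v)
  then show ?case
  proof
    assume "v = (1,0)"
    then have "rneg v = refl1 a b (1,0)" by (simp add: refl1_eq rneg_eq)
    then show ?thesis by (simp add: Worbit.base)
  next
    assume "v \<in> {(0,1)}"
    then have "rneg v = refl2 a b (0,1)" by (simp add: refl2_eq rneg_eq)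
    then show ?thesis by (simp add: Worbit.base)
  qed
next
  case (step1 v) then show ?case by (simp add: refl1_rneg[symmetric])
next
  case (step2 v) then show ?case by (simp add: refl2_rneg[symmetric])
qed

lemma real_rneg_iff[simp]: "rneg v \<in> real_roots a b \<longleftrightarrow> v \<in> real_roots a b"
  by (metis real_rneg rneg_invol)

lemma real_refl1_iff[simp]: "refl1 a b v \<in> real_roots a b \<longleftrightarrow> v \<in> real_roots a b"
  by (simp add: real_roots_def)
lemma real_refl2_iff[simp]: "refl2 a b v \<in> real_roots a b \<longleftrightarrow> v \<in> real_roots a b"
  by (simp add: real_roots_def)

lemma imag_rneg_iff[simp]: "rneg v \<in> imag_roots a b \<longleftrightarrow> v \<in> imag_roots a b"
  by (auto simp: imag_roots_def mem_rneg_image)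
lemma imag_refl1_iff[simp]: "refl1 a b v \<in> imag_roots a b \<longleftrightarrow> v \<in> imag_roots a b"
  by (auto simp: imag_roots_def mem_rneg_image refl1_rneg[symmetric])
lemma imag_refl2_iff[simp]: "refl2 a b v \<in> imag_roots a b \<longleftrightarrow> v \<in> imag_roots a b"
  by (auto simp: imag_roots_def mem_rneg_image refl2_rneg[symmetric])

lemma roots_rneg_iff[simp]: "rneg v \<in> roots a b \<longleftrightarrow> v \<in> roots a b"
  by (simp add: roots_def)
lemma roots_refl1_iff[simp]: "refl1 a b v \<in> roots a b \<longleftrightarrow> v \<in> roots a b"
  by (simp add: roots_def)
lemma roots_refl2_iff[simp]: "refl2 a b v \<in> roots a b \<longleftrightarrow> v \<in> roots a b"
  by (simp add: roots_def)

lemma Q_real: "v \<in> real_roots a b \<Longrightarrow> Qf a b v = a \<or> Qf a b v = b"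
  unfolding real_roots_def
proof (induction rule: Worbit.induct)
  case (base v) then show ?case by (auto simp: Qf_def)
qed simp_all

lemma coprime_real: "v \<in> real_roots a b \<Longrightarrow> coprime (fst v) (snd v)"
  unfolding real_roots_def
proof (induction rule: Worbit.induct)
  case (base v) then show ?case by auto
next
  case (step1 v)
  obtain x y where v: "v = (x,y)" by (cases v)
  have "gcd (a*y - x) y = gcd (-x) y"
    by (metis add.commute diff_conv_add_uminus gcd.commute gcd_add_mult mult.commute)
  then show ?case using step1 v by (simp add: refl1_eq coprime_iff_gcd_eq_1)
next
  case (step2 v)
  obtain x y where v: "v = (x,y)" by (cases v)
  have "gcd x (b*x - y) = gcd x (-y)"
    by (metis diff_conv_add_uminus gcd_add_mult)
  then show ?case using step2 v by (simp add: refl2_eq coprime_iff_gcd_eq_1)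
qed

lemma Q_imag:
  assumes "0 \<le> a" "0 \<le> b"
  shows "v \<in> imag_roots a b \<Longrightarrow> Qf a b v \<le> 0"
proof -
  have "v \<in> Worbit a b (fund_set a b) \<Longrightarrow> Qf a b v \<le> 0" for v
  proof (induction rule: Worbit.induct)
    case (base v)
    obtain x y where v: "v = (x,y)" by (cases v)
    have h: "0 \<le> x" "0 \<le> y" "2*x - a*y \<le> 0" "-b*x + 2*y \<le> 0"
      using base v by (auto simp: fund_set_def cop1_def cop2_def)
    have "2 * Qf a b v = (b*x)*(2*x - a*y) + (a*y)*(-b*x + 2*y)"
      by (simp add: v Qf_def power2_eq_square algebra_simps)
    moreover have "(b*x)*(2*x - a*y) \<le> 0"
      using h assms by (simp add: mult_nonneg_nonpos)
    moreover have "(a*y)*(-b*x + 2*y) \<le> 0"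
      using h assms by (simp add: mult_nonneg_nonpos)
    ultimately show ?case by linarith
  qed auto
  moreover assume "v \<in> imag_roots a b"
  ultimately show "Qf a b v \<le> 0"
    unfolding imag_roots_def by (metis Qf_rneg Un_iff mem_rneg_image)
qed




lemma zero_notin_Worbit: "v \<in> Worbit a b S \<Longrightarrow> (0,0) \<notin> S \<Longrightarrow> v \<noteq> (0,0)"
proof (induction rule: Worbit.induct)
  case (step1 v)
  have "refl1 a b (0,0) = (0,0)" by (simp add: refl1_eq)
  then show ?case using step1 by (metis refl1_invol)
next
  case (step2 v)
  have "refl2 a b (0,0) = (0,0)" by (simp add: refl2_eq)
  then show ?case using step2 by (metis refl2_invol)
qed auto

lemma zero_notin_roots:
  assumes "1 \<le> a" "1 \<le> b"
  shows "(0,0) \<notin> roots a b"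
proof -
  have "(0,0) \<notin> real_roots a b"
    using Q_real[of "(0,0)" a b] assms by (auto simp: Qf_def)
  moreover have "(0,0) \<notin> Worbit a b (fund_set a b)"
    using zero_notin_Worbit[where S="fund_set a b"] by (auto simp: fund_set_def)
  moreover have "rneg (0,0) = (0::int,0::int)" by (simp add: rneg_eq)
  ultimately show ?thesis
    by (auto simp: roots_def imag_roots_def mem_rneg_image)
qed

lemma notroot_Q:
  assumes "1 \<le> b" "b \<le> a" "Qf a b v > a"
  shows "v \<notin> roots a b"
  using Q_real[of v a b] Q_imag[of a b v] assms by (auto simp: roots_def)



lemma descent:
  assumes a: "1 \<le> a" and b: "1 \<le> b"
  shows "\<forall>v. nat (fst v + snd v) = n \<longrightarrow> fst v \<ge> 0 \<longrightarrow> snd v \<ge> 0 \<longrightarrow> v \<noteq> (0,0)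
           \<longrightarrow> Qf a b v \<le> 0 \<longrightarrow> v \<in> Worbit a b (fund_set a b)"
proof (induction n rule: less_induct)
  case (less n)
  show ?case
  proof (intro allI impI)
    fix v :: "int \<times> int"
    assume n: "nat (fst v + snd v) = n" and x0: "fst v \<ge> 0" and y0: "snd v \<ge> 0"
      and nz: "v \<noteq> (0,0)" and Q: "Qf a b v \<le> 0"
    obtain x y where v: "v = (x,y)" by (cases v)
    have Qe: "Qf a b v = b*x*(x - a*y) + a*y^2" "Qf a b v = a*y*(y - b*x) + b*x^2"
      by (simp_all add: v Qf_def power2_eq_square algebra_simps)
    have x0': "x \<ge> 0" and y0': "y \<ge> 0" using x0 y0 v by auto
    show "v \<in> Worbit a b (fund_set a b)"
    proof (cases "2*x - a*y > 0")
      case True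
      have ge: "a*y - x \<ge> 0"
      proof (rule ccontr)
        assume "\<not> ?thesis"
        then have "x - a*y > 0" by simp
        moreover have "x > 0" using \<open>x - a*y > 0\<close> a y0' by (smt (verit) mult_nonneg_nonneg)
        ultimately have "b*x*(x - a*y) > 0" using b by simp
        moreover have "a*y^2 \<ge> 0" using a by simp
        ultimately show False using Q Qe by linarith
      qed
      have ynz: "y \<noteq> 0"
      proof
        assume "y = 0"
        then have "Qf a b v = b*x^2" using Qe(2) by simp
        then have "b*x^2 \<le> 0" using Q by simp
        then have "x = 0" using b by (smt (verit) mult_pos_pos zero_less_power2)
        then show False using nz v \<open>y = 0\<close> by simp
      qed
      let ?w = "refl1 a b v"
      have w: "?w = (a*y - x, y)" by (simp add: v refl1_eq)
      have lt: "nat (fst ?w + snd ?w) < n" using n True v x0' y0' ge unfolding w by simp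
      have "Qf a b ?w \<le> 0" using Q by simp
      moreover have "?w \<noteq> (0,0)" using ynz unfolding w by simp
      ultimately have "?w \<in> Worbit a b (fund_set a b)"
        using less.IH[OF lt] ge y0' unfolding w by simp
      then show ?thesis by simp
    next
      case False
      note F1 = False
      show ?thesis
      proof (cases "-b*x + 2*y > 0")
        case True
        have ge: "b*x - y \<ge> 0"
        proof (rule ccontr)
          assume "\<not> ?thesis"
          then have "y - b*x > 0" by simp
          moreover have "y > 0" using \<open>y - b*x > 0\<close> b x0' by (smt (verit) mult_nonneg_nonneg)
          ultimately have "a*y*(y - b*x) > 0" using a by simp
          moreover have "b*x^2 \<ge> 0" using b by simp
          ultimately show False using Q Qe by linarith
        qed
        have xnz: "x \<noteq> 0"
        proof
          assume "x = 0"
          then have "Qf a b v = a*y^2" using Qe(1) by simp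
          then have "a*y^2 \<le> 0" using Q by simp
          then have "y = 0" using a by (smt (verit) mult_pos_pos zero_less_power2)
          then show False using nz v \<open>x = 0\<close> by simp
        qed
        let ?w = "refl2 a b v"
        have w: "?w = (x, b*x - y)" by (simp add: v refl2_eq)
        have lt: "nat (fst ?w + snd ?w) < n" using n True v x0' y0' ge unfolding w by simp
        have "Qf a b ?w \<le> 0" using Q by simp
        moreover have "?w \<noteq> (0,0)" using xnz unfolding w by simp
        ultimately have "?w \<in> Worbit a b (fund_set a b)"
          using less.IH[OF lt] ge x0' unfolding w by simp
        then show ?thesis by simp
      next
        case False
        then have "v \<in> fund_set a b" using F1 x0 y0 nz v by (auto simp: fund_set_def cop1_def cop2_def)
        then show ?thesis by (rule Worbit.base)
      qed
    qed
  qed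
qed

lemma imag_pos:
  assumes "1 \<le> a" "1 \<le> b" "fst v \<ge> 0" "snd v \<ge> 0" "v \<noteq> (0,0)" "Qf a b v \<le> 0"
  shows "v \<in> roots a b"
proof -
  have "v \<in> Worbit a b (fund_set a b)"
    using descent[OF assms(1,2), of "nat (fst v + snd v)"] assms by blast
  then show ?thesis by (auto simp: roots_def imag_roots_def)
qed



lemma cc0[simp]: "cc a b 0 = 0" and cc1[simp]: "cc a b (Suc 0) = 1"
  and dd0[simp]: "dd a b 0 = 0" and dd1[simp]: "dd a b (Suc 0) = 1"
  by (simp_all add: cc_def dd_def)
lemma ccSS[simp]: "cc a b (Suc (Suc k)) = a * dd a b (Suc k) - cc a b k"
  by (simp add: cc_def dd_def)
lemma ddSS[simp]: "dd a b (Suc (Suc k)) = b * cc a b (Suc k) - dd a b k"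
  by (simp add: cc_def dd_def)

lemma beta1: "beta a b 1 j = (cc a b j, dd a b (Suc j))" by (simp add: beta_def)
lemma beta1S: "beta a b (Suc 0) j = (cc a b j, dd a b (Suc j))" by (simp add: beta_def)
lemma beta2: "beta a b 2 j = (cc a b (Suc j), dd a b j)" by (simp add: beta_def)

lemma refl1_b1: "refl1 a b (beta a b 1 j) = beta a b 2 (Suc j)"
  by (simp add: beta1 beta2 refl1_eq beta1S)
lemma refl1_b2S: "refl1 a b (beta a b 2 (Suc j)) = beta a b 1 j"
  by (simp add: beta1 beta2 refl1_eq beta1S)
lemma refl1_b20: "refl1 a b (beta a b 2 0) = rneg (beta a b 2 0)"
  by (simp add: beta2 refl1_eq rneg_eq)
lemma refl2_b2: "refl2 a b (beta a b 2 j) = beta a b 1 (Suc j)"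
  by (simp add: beta1 beta2 refl2_eq beta1S)
lemma refl2_b1S: "refl2 a b (beta a b 1 (Suc j)) = beta a b 2 j"
  by (simp add: beta1 beta2 refl2_eq beta1S)
lemma refl2_b10: "refl2 a b (beta a b 1 0) = rneg (beta a b 1 0)"
  by (simp add: beta1 refl2_eq rneg_eq beta1S)

lemmas refl1_b1' = refl1_b1[unfolded One_nat_def]
lemmas refl1_b2S' = refl1_b2S[unfolded One_nat_def]
lemmas refl2_b1S' = refl2_b1S[unfolded One_nat_def]
lemmas refl2_b10' = refl2_b10[unfolded One_nat_def]

lemmas beta_moves = refl1_b1' refl1_b2S' refl2_b1S' refl2_b10' refl1_b1 refl1_b2S refl1_b20 refl2_b2 refl2_b1S refl2_b10
  refl1_rsub refl2_rsub refl1_rneg refl2_rneg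

definition PM :: "int \<Rightarrow> int \<Rightarrow> (int \<times> int) set" where
  "PM a b = {v. \<exists>i\<in>{1,2}. \<exists>j. v = beta a b i j \<or> v = rneg (beta a b i j)}"

lemma real_sub_PM: "v \<in> real_roots a b \<Longrightarrow> v \<in> PM a b"
  unfolding real_roots_def
proof (induction rule: Worbit.induct)
  case (base v)
  have "(1,0) = beta a b 2 0" "(0,1) = beta a b 1 0" "(0,1) = beta a b (Suc 0) 0" by (simp_all add: beta1 beta2 beta1S)
  then show ?case using base unfolding PM_def by fastforce
next
  case (step1 v)
  then obtain i j where i: "i \<in> {1,2}" and v: "v = beta a b i j \<or> v = rneg (beta a b i j)"
    unfolding PM_def by blast
  have "refl1 a b (beta a b i j) \<in> PM a b"
  proof (cases "i = 1")
    case True then show ?thesis unfolding PM_def by (auto simp: refl1_b1 refl1_b1')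
  next
    case False then have "i = 2" using i by auto
    then show ?thesis unfolding PM_def
      by (cases j) (auto simp: refl1_b2S refl1_b20)
  qed
  moreover have "rneg w \<in> PM a b" if "w \<in> PM a b" for w
    using that unfolding PM_def by auto
  ultimately show ?case using v by (metis refl1_rneg)
next
  case (step2 v)
  then obtain i j where i: "i \<in> {1,2}" and v: "v = beta a b i j \<or> v = rneg (beta a b i j)"
    unfolding PM_def by blast
  have "refl2 a b (beta a b i j) \<in> PM a b"
  proof (cases "i = 1")
    case True then show ?thesis unfolding PM_def
      by (cases j) (auto simp: refl2_b1S refl2_b10 refl2_b1S' refl2_b10')
  next
    case False then have "i = 2" using i by auto
    then show ?thesis unfolding PM_def by (auto simp: refl2_b2)
  qed
  moreover have "rneg w \<in> PM a b" if "w \<in> PM a b" for w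
    using that unfolding PM_def by auto
  ultimately show ?case using v by (metis refl2_rneg)
qed

lemma beta_real_both: "beta a b 1 j \<in> real_roots a b \<and> beta a b 2 j \<in> real_roots a b"
proof (induction j)
  case 0
  have "(1,0) \<in> real_roots a b" "(0,1) \<in> real_roots a b"
    by (auto simp: real_roots_def intro: Worbit.base)
  then show ?case by (simp add: beta1 beta2 beta1S)
next
  case (Suc j)
  have "beta a b 2 (Suc j) = refl1 a b (beta a b 1 j)" by (simp only: refl1_b1)
  moreover have "beta a b 1 (Suc j) = refl2 a b (beta a b 2 j)" by (simp add: refl2_b2)
  ultimately show ?case using Suc by simp
qed

lemma beta_real: "i \<in> {1,2} \<Longrightarrow> beta a b i j \<in> real_roots a b"
  using beta_real_both by auto

lemma PM_sub_real: "v \<in> PM a b \<Longrightarrow> v \<in> real_roots a b"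
  unfolding PM_def using beta_real by force

lemma real_eq_PM: "real_roots a b = PM a b"
  using PM_sub_real real_sub_PM by blast

lemma chain:
  fixes X Y :: "nat \<Rightarrow> int"
  assumes ab4: "a*b \<ge> 4" and a: "a > 0" and b: "b > 0"
    and rX: "\<And>n. X (Suc (Suc n)) = a * Y (Suc n) - X n"
    and rY: "\<And>n. Y (Suc (Suc n)) = b * X (Suc n) - Y n"
    and i1: "a * Y 1 \<ge> 2 * X 0" and i2: "X 0 \<ge> 0" and i3: "b * X 1 \<ge> 2 * Y 0" and i4: "Y 0 \<ge> 0"
  shows "a * Y (Suc n) \<ge> 2 * X n \<and> X n \<ge> 0 \<and> b * X (Suc n) \<ge> 2 * Y n \<and> Y n \<ge> 0"
proof (induction n)
  case 0 then show ?case using i1 i2 i3 i4 by simp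
next
  case (Suc n)
  then have h1: "a * Y (Suc n) \<ge> 2 * X n" and h2: "X n \<ge> 0"
    and h3: "b * X (Suc n) \<ge> 2 * Y n" and h4: "Y n \<ge> 0" by auto
  have x1: "X (Suc n) \<ge> 0"
  proof (rule ccontr)
    assume "\<not> ?thesis"
    then have "b * X (Suc n) < 0" using b by (simp add: mult_pos_neg)
    then show False using h3 h4 by linarith
  qed
  have y1: "Y (Suc n) \<ge> 0"
  proof (rule ccontr)
    assume "\<not> ?thesis"
    then have "a * Y (Suc n) < 0" using a by (simp add: mult_pos_neg)
    then show False using h1 h2 by linarith
  qed
  have m1: "a * (2 * Y n) \<le> a * (b * X (Suc n))" using h3 a by simp
  have m2: "4 * X (Suc n) \<le> (a*b) * X (Suc n)" using ab4 x1 by (simp add: mult_right_mono)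
  have "a * Y (Suc (Suc n)) = a * b * X (Suc n) - a * Y n" by (simp add: rY algebra_simps)
  then have g1: "a * Y (Suc (Suc n)) \<ge> 2 * X (Suc n)" using m1 m2 by (simp add: algebra_simps)
  have m3: "b * (2 * X n) \<le> b * (a * Y (Suc n))" using h1 b by simp
  have m4: "4 * Y (Suc n) \<le> (a*b) * Y (Suc n)" using ab4 y1 by (simp add: mult_right_mono)
  have "b * X (Suc (Suc n)) = a * b * Y (Suc n) - b * X n" by (simp add: rX algebra_simps)
  then have g2: "b * X (Suc (Suc n)) \<ge> 2 * Y (Suc n)" using m3 m4 by (simp add: algebra_simps)
  show ?case using g1 g2 x1 y1 by simp
qed

lemma mono2:
  fixes X :: "nat \<Rightarrow> int"
  assumes "\<And>n. X n \<le> X (Suc (Suc n))"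
  shows "X m \<le> X (m + 2*k)"
proof (induction k)
  case (Suc k)
  have "X (m + 2*k) \<le> X (Suc (Suc (m + 2*k)))" by (rule assms)
  then show ?case using Suc by simp
qed simp

lemma mono2_min:
  fixes X :: "nat \<Rightarrow> int"
  assumes "\<And>n. X n \<le> X (Suc (Suc n))" "m \<le> n"
  shows "min (X m) (X (Suc m)) \<le> X n"
proof -
  have "\<exists>k. n = m + 2*k \<or> n = Suc m + 2*k"
    using \<open>m \<le> n\<close> by presburger
  then obtain k where "n = m + 2*k \<or> n = Suc m + 2*k" by blast
  moreover have "X m \<le> X (m + 2*k)" by (rule mono2) (rule assms(1))
  moreover have "X (Suc m) \<le> X (Suc m + 2*k)" by (rule mono2) (rule assms(1))
  ultimately show ?thesis by auto
qed



definition EE :: "int \<Rightarrow> int \<Rightarrow> nat \<Rightarrow> int" where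
  "EE a b n = cc a b (Suc (Suc n)) - cc a b n"
definition FF :: "int \<Rightarrow> int \<Rightarrow> nat \<Rightarrow> int" where
  "FF a b n = dd a b (Suc (Suc n)) - dd a b n"

locale KM =
  fixes a b :: int
  assumes ba: "b \<le> a" and b1: "1 \<le> b" and hyp: "b \<ge> 2 \<or> (b = 1 \<and> a \<ge> 5)"
begin

lemma ab4: "a * b \<ge> 4"
proof (cases "b \<ge> 2")
  case True
  then have "2 * 2 \<le> a * b" using ba by (intro mult_mono) auto
  then show ?thesis by simp
next
  case False then show ?thesis using hyp by auto
qed

lemma apos: "a > 0" using ba b1 by simp
lemma bpos: "b > 0" using b1 by simp

lemma cd_inv: "a * dd a b (Suc n) \<ge> 2 * cc a b n \<and> cc a b n \<ge> 0 \<and> b * cc a b (Suc n) \<ge> 2 * dd a b n \<and> dd a b n \<ge> 0"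
  by (rule chain[OF ab4 apos bpos]) (use apos bpos in simp_all)

end

context KM begin
lemma EErec: "EE a b (Suc (Suc n)) = a * FF a b (Suc n) - EE a b n"
  by (simp add: EE_def FF_def algebra_simps)
lemma FFrec: "FF a b (Suc (Suc n)) = b * EE a b (Suc n) - FF a b n"
  by (simp add: EE_def FF_def algebra_simps)

lemma EE0: "EE a b 0 = a" by (simp add: EE_def)
lemma EE1: "EE a b 1 = a*b - 2" by (simp add: EE_def numeral_eq_Suc)
lemma FF0: "FF a b 0 = b" by (simp add: FF_def)
lemma FF1: "FF a b 1 = a*b - 2" by (simp add: FF_def numeral_eq_Suc algebra_simps)
lemma EE2: "EE a b 2 = a*a*b - 3*a" by (simp add: EE_def numeral_eq_Suc algebra_simps)
lemma EE3: "EE a b 3 = a*a*b*b - 4*a*b + 2" by (simp add: EE_def numeral_eq_Suc algebra_simps)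
lemma EE1': "EE a b (Suc 0) = a*b - 2" using EE1 by simp
lemma FF1': "FF a b (Suc 0) = a*b - 2" using FF1 by simp
lemma EE2': "EE a b (Suc (Suc 0)) = a*a*b - 3*a" using EE2 by (simp add: numeral_2_eq_2)
lemma EE3': "EE a b (Suc (Suc (Suc 0))) = a*a*b*b - 4*a*b + 2" using EE3 by (simp add: numeral_3_eq_3)
lemma FF2: "FF a b 2 = a*b*b - 3*b" by (simp add: FF_def numeral_eq_Suc algebra_simps)

lemma FF2': "FF a b (Suc (Suc 0)) = a*b*b - 3*b" using FF2 by (simp add: numeral_2_eq_2)
end

context KM begin
lemma EF_inv: "a * FF a b (Suc n) \<ge> 2 * EE a b n \<and> EE a b n \<ge> 0 \<and> b * EE a b (Suc n) \<ge> 2 * FF a b n \<and> FF a b n \<ge> 0"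
proof (rule chain[OF ab4 apos bpos])
  show "\<And>n. EE a b (Suc (Suc n)) = a * FF a b (Suc n) - EE a b n" by (rule EErec)
  show "\<And>n. FF a b (Suc (Suc n)) = b * EE a b (Suc n) - FF a b n" by (rule FFrec)
  have "a * (a*b - 4) \<ge> 0" using apos ab4 by simp
  then show "2 * EE a b 0 \<le> a * FF a b 1" by (simp add: EE0 FF1 FF1' algebra_simps)
  show "0 \<le> EE a b 0" using apos by (simp add: EE0)
  have "b * (a*b - 4) \<ge> 0" using bpos ab4 by simp
  then show "2 * FF a b 0 \<le> b * EE a b 1" by (simp add: FF0 EE1 EE1' algebra_simps)
  show "0 \<le> FF a b 0" using bpos by (simp add: FF0)
qed

lemma EE_mono: "EE a b n \<le> EE a b (Suc (Suc n))"
  using EF_inv[of n] EErec[of n] by simp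
lemma FF_mono: "FF a b n \<le> FF a b (Suc (Suc n))"
  using EF_inv[of n] FFrec[of n] by simp

lemma bEE_b2: assumes "b \<ge> 2" shows "b * EE a b n \<ge> a + b"
proof -
  have m: "\<And>n. b * EE a b n \<le> b * EE a b (Suc (Suc n))" using EE_mono bpos by simp
  have "min (b * EE a b 0) (b * EE a b (Suc 0)) \<le> b * EE a b n"
    using mono2_min[where X="\<lambda>n. b * EE a b n", OF m, of 0 n] by simp
  moreover have "b * EE a b 0 \<ge> a + b"
  proof -
    have "1 * 1 \<le> (a - 1) * (b - 1)" by (rule mult_mono) (use assms ba in auto)
    moreover have "b * EE a b 0 = (a - 1) * (b - 1) + a + b - 1" by (simp add: EE0 algebra_simps)
    ultimately show ?thesis by linarith
  qed
  moreover have "b * EE a b (Suc 0) \<ge> a + b"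
  proof -
    have "2 * 2 \<le> b * b" by (rule mult_mono) (use assms in auto)
    then have "a * (b*b - 4) \<ge> 0" using apos by simp
    moreover have "b * EE a b (Suc 0) = a * (b*b - 4) + 3*a - 3*b + a + b"
      by (simp add: EE1' algebra_simps)
    ultimately show ?thesis using ba by linarith
  qed
  ultimately show ?thesis by linarith
qed

lemma FF_b2: assumes "b \<ge> 2" shows "FF a b n \<ge> 2"
proof -
  have "min (FF a b 0) (FF a b (Suc 0)) \<le> FF a b n"
    using mono2_min[where X="FF a b", OF FF_mono, of 0 n] by simp
  moreover have "FF a b (Suc 0) \<ge> 2" using FF1 ab4 by simp
  ultimately show ?thesis using FF0 assms by linarith
qed

lemma EE_b1: assumes "b = 1" "n \<ge> 2" shows "EE a b n \<ge> a + 1"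
proof -
  have "min (EE a b 2) (EE a b (Suc 2)) \<le> EE a b n"
    using mono2_min[where X="EE a b", OF EE_mono, of 2 n] assms by simp
  moreover have h: "5 * a \<le> a * a" using hyp assms apos by (intro mult_right_mono) auto
  then have "a*a - 4*a + 2 \<ge> a + 1" "a*a - 3*a \<ge> a + 1" using hyp assms by linarith+
  moreover have "EE a b (Suc 2) = EE a b 3" by simp
  ultimately show ?thesis using EE2 EE3 assms by (simp add: min_def split: if_splits)
qed

lemma EE1_b1: assumes "b = 1" shows "EE a b 1 \<ge> 2"
  using EE1 assms hyp by simp

lemma FF_b1: assumes "b = 1" "n \<ge> 1" shows "FF a b n \<ge> 2"
proof -
  have "min (FF a b 1) (FF a b (Suc 1)) \<le> FF a b n"
    using mono2_min[where X="FF a b", OF FF_mono, of 1 n] assms by simp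
  then show ?thesis using FF1' FF2' assms hyp by (auto simp: min_def split: if_splits)
qed

end


lemma Qshift2: "Qf a b (x, y + 1) = Qf a b (x, y) + a + a * (2*y - b*x)"
  by (simp add: Qf_def power2_eq_square algebra_simps)
lemma Qshift1: "Qf a b (x + 1, y) = Qf a b (x, y) + b + b * (2*x - a*y)"
  by (simp add: Qf_def power2_eq_square algebra_simps)

lemmas bdefs = beta1 beta1S beta2

context KM begin

lemma Qbeta: "i \<in> {1,2} \<Longrightarrow> b \<le> Qf a b (beta a b i j) \<and> Qf a b (beta a b i j) \<le> a"
  using Q_real[OF beta_real[of i a b j]] ba by auto

lemma Qbeta1: "b \<le> Qf a b (cc a b j, dd a b (Suc j)) \<and> Qf a b (cc a b j, dd a b (Suc j)) \<le> a"
  using Qbeta[of 1 j] by (simp add: beta1 beta1S)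
lemma Qbeta2: "b \<le> Qf a b (cc a b (Suc j), dd a b j) \<and> Qf a b (cc a b (Suc j), dd a b j) \<le> a"
  using Qbeta[of 2 j] by (simp add: beta2)

lemma B1: "rsub (beta a b 1 0) (rneg (beta a b 1 n)) \<notin> roots a b"
proof -
  have v: "rsub (beta a b 1 0) (rneg (beta a b 1 n)) = (cc a b n, dd a b (Suc n) + 1)"
    by (simp add: bdefs rsub_eq rneg_eq)
  have nn: "2 * dd a b (Suc n) - b * cc a b n \<ge> 0"
  proof (cases n)
    case 0 then show ?thesis by simp
  next
    case (Suc m)
    then show ?thesis using cd_inv[of m] by simp
  qed
  have "a * (2 * dd a b (Suc n) - b * cc a b n) \<ge> 0" using nn apos by simp
  then have "Qf a b (cc a b n, dd a b (Suc n) + 1) > a"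
    using Qshift2[of a b "cc a b n" "dd a b (Suc n)"] Qbeta1[of n] b1 by linarith
  then show ?thesis unfolding v using notroot_Q b1 ba by blast
qed

lemma B2: "rsub (beta a b 2 0) (rneg (beta a b 2 n)) \<in> roots a b \<longleftrightarrow> (b = 1 \<and> n = 2)"
proof (cases n)
  case 0
  have v: "rsub (beta a b 2 0) (rneg (beta a b 2 n)) = (2, 0)"
    by (simp add: 0 bdefs rsub_eq rneg_eq)
  have "\<not> coprime (2::int) 0" by simp
  then have "(2,0) \<notin> real_roots a b" using coprime_real by fastforce
  moreover have "(2,0) \<notin> imag_roots a b"
    using Q_imag[of a b "(2,0)"] apos bpos by (auto simp: Qf_def)
  ultimately show ?thesis unfolding v roots_def using 0 by auto
next
  case (Suc m)
  have v: "rsub (beta a b 2 0) (rneg (beta a b 2 n)) = (cc a b (Suc (Suc m)) + 1, dd a b (Suc m))"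
    by (simp add: Suc bdefs rsub_eq rneg_eq)
  have Qv: "Qf a b (cc a b (Suc (Suc m)) + 1, dd a b (Suc m))
      = Qf a b (cc a b (Suc (Suc m)), dd a b (Suc m)) + b + b * EE a b m"
    using Qshift1[of a b "cc a b (Suc (Suc m))" "dd a b (Suc m)"]
    by (simp add: EE_def algebra_simps)
  show ?thesis
  proof (cases "b = 1 \<and> m = 1")
    case True
    have "(cc a b (Suc (Suc m)) + 1, dd a b (Suc m)) = refl1 a b (0,1)"
      using True by (simp add: refl1_eq numeral_eq_Suc)
    moreover have "(0,1) \<in> real_roots a b" by (auto simp: real_roots_def intro: Worbit.base)
    ultimately have "(cc a b (Suc (Suc m)) + 1, dd a b (Suc m)) \<in> roots a b"
      by (simp add: roots_def)
    then show ?thesis unfolding v using True Suc by simp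
  next
    case False
    have QB: "b \<le> Qf a b (cc a b (Suc (Suc m)), dd a b (Suc m))" using Qbeta2[of "Suc m"] by simp
    have "Qf a b (cc a b (Suc (Suc m)) + 1, dd a b (Suc m)) > a"
    proof (cases "b \<ge> 2")
      case True
      then show ?thesis using bEE_b2[OF True, of m] Qv QB by linarith
    next
      case False
      then have b: "b = 1" using b1 by simp
      then have "m \<noteq> 1" using \<open>\<not> (b = 1 \<and> m = 1)\<close> by simp
      then consider "m = 0" | "m \<ge> 2" by linarith
      then show ?thesis
      proof cases
        case 1 then show ?thesis using Qv QB b EE0 by simp
      next
        case 2 then show ?thesis using Qv QB b EE_b1[OF b 2] by simp
      qed
    qed
    then show ?thesis unfolding v using notroot_Q b1 ba False Suc by auto
  qed
qed

lemma B3: "rsub (beta a b 1 n) (rneg (beta a b 2 0)) \<in> roots a b"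
proof -
  have v: "rsub (beta a b 1 n) (rneg (beta a b 2 0)) = (cc a b n + 1, dd a b (Suc n))"
    by (simp add: bdefs rsub_eq rneg_eq)
  have Qv: "Qf a b (cc a b n + 1, dd a b (Suc n)) = Qf a b (cc a b n, dd a b (Suc n)) + b - b * EE a b n"
    using Qshift1[of a b "cc a b n" "dd a b (Suc n)"]
    by (simp add: EE_def algebra_simps)
  show ?thesis
  proof (cases "b = 1 \<and> n = 0")
    case True
    have "(cc a b n + 1, dd a b (Suc n)) = refl2 a b (1,0)"
      using True by (simp add: refl2_eq)
    moreover have "(1,0) \<in> real_roots a b" by (auto simp: real_roots_def intro: Worbit.base)
    ultimately show ?thesis unfolding v by (simp add: roots_def)
  next
    case False
    have QB: "Qf a b (cc a b n, dd a b (Suc n)) \<le> a" using Qbeta1[of n] by simp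
    have "Qf a b (cc a b n + 1, dd a b (Suc n)) \<le> 0"
    proof (cases "b \<ge> 2")
      case True
      then show ?thesis using bEE_b2[OF True, of n] Qv QB by linarith
    next
      case False
      then have b: "b = 1" using b1 by simp
      then have "n \<noteq> 0" using \<open>\<not> (b = 1 \<and> n = 0)\<close> by simp
      then consider "n = 1" | "n \<ge> 2" by linarith
      then show ?thesis
      proof cases
        case 1
        have "Qf a b (cc a b n, dd a b (Suc n)) = 1" using 1 b by (simp add: Qf_def numeral_eq_Suc)
        then show ?thesis using Qv b EE1_b1[OF b] 1 by simp
      next
        case 2 then show ?thesis using Qv QB b EE_b1[OF b 2] by simp
      qed
    qed
    moreover have "cc a b n \<ge> 0" "dd a b (Suc n) \<ge> 0" using cd_inv[of n] cd_inv[of "Suc n"] by auto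
    ultimately show ?thesis unfolding v using imag_pos[of a b] apos bpos by simp
  qed
qed

lemma B4: "rsub (beta a b 1 0) (rneg (beta a b 2 n)) \<in> roots a b"
proof -
  have v: "rsub (beta a b 1 0) (rneg (beta a b 2 n)) = (cc a b (Suc n), dd a b n + 1)"
    by (simp add: bdefs rsub_eq rneg_eq)
  have Qv: "Qf a b (cc a b (Suc n), dd a b n + 1) = Qf a b (cc a b (Suc n), dd a b n) + a - a * FF a b n"
    using Qshift2[of a b "cc a b (Suc n)" "dd a b n"]
    by (simp add: FF_def algebra_simps)
  show ?thesis
  proof (cases "b = 1 \<and> n = 0")
    case True
    have "(cc a b (Suc n), dd a b n + 1) = refl2 a b (1,0)"
      using True by (simp add: refl2_eq)
    moreover have "(1,0) \<in> real_roots a b" by (auto simp: real_roots_def intro: Worbit.base)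
    ultimately show ?thesis unfolding v by (simp add: roots_def)
  next
    case False
    have QB: "Qf a b (cc a b (Suc n), dd a b n) \<le> a" using Qbeta2[of n] by simp
    have F2: "FF a b n \<ge> 2"
    proof (cases "b \<ge> 2")
      case True then show ?thesis using FF_b2 by simp
    next
      case False
      then have b: "b = 1" using b1 by simp
      then have "n \<ge> 1" using \<open>\<not> (b = 1 \<and> n = 0)\<close> by simp
      then show ?thesis using FF_b1[OF b] by simp
    qed
    have "a * FF a b n \<ge> a * 2" using F2 apos by simp
    then have "Qf a b (cc a b (Suc n), dd a b n + 1) \<le> 0" using Qv QB by linarith
    moreover have "cc a b (Suc n) \<ge> 0" "dd a b n \<ge> 0" using cd_inv[of n] cd_inv[of "Suc n"] by auto
    ultimately show ?thesis unfolding v using imag_pos[of a b] apos bpos by simp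
  qed
qed

end


lemmas pv = bdefs rsub_eq rneg_eq refl1_eq refl2_eq

lemma M1: "refl1 a b (rsub (beta a b 1 j) (rneg (beta a b 2 (Suc k)))) = rsub (beta a b 1 k) (rneg (beta a b 2 (Suc j)))"
  by (simp add: pv algebra_simps)
lemma M2: "refl2 a b (rsub (beta a b 1 (Suc j)) (rneg (beta a b 2 k))) = rsub (beta a b 1 (Suc k)) (rneg (beta a b 2 j))"
  by (simp add: pv algebra_simps)
lemma M3: "refl1 a b (rsub (beta a b 1 j) (beta a b 2 (Suc k))) = rneg (rsub (beta a b 1 k) (beta a b 2 (Suc j)))"
  by (simp add: pv algebra_simps)
lemma M4: "refl2 a b (rsub (beta a b 1 (Suc j)) (beta a b 2 k)) = rneg (rsub (beta a b 1 (Suc k)) (beta a b 2 j))"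
  by (simp add: pv algebra_simps)
lemma M5: "refl1 a b (rsub (beta a b 1 j) (beta a b 2 0)) = rsub (beta a b 2 0) (rneg (beta a b 2 (Suc j)))"
  by (simp add: pv algebra_simps)
lemma M6: "refl2 a b (rsub (beta a b 1 0) (beta a b 2 n)) = rneg (rsub (beta a b 1 0) (rneg (beta a b 1 (Suc n))))"
  by (simp add: pv algebra_simps)
lemma M7: "refl2 a b (rsub (beta a b 1 (Suc j)) (rneg (beta a b 1 (Suc k)))) = rsub (beta a b 2 j) (rneg (beta a b 2 k))"
  by (simp add: pv algebra_simps)
lemma M8: "refl1 a b (rsub (beta a b 2 (Suc j)) (rneg (beta a b 2 (Suc k)))) = rsub (beta a b 1 j) (rneg (beta a b 1 k))"
  by (simp add: pv algebra_simps)
lemma M9: "refl2 a b (rsub (beta a b 1 0) (beta a b 1 (Suc n))) = rneg (rsub (beta a b 1 0) (rneg (beta a b 2 n)))"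
  by (simp add: pv algebra_simps)
lemma M10: "refl1 a b (rsub (beta a b 2 0) (beta a b 2 (Suc n))) = rneg (rsub (beta a b 1 n) (rneg (beta a b 2 0)))"
  by (simp add: pv algebra_simps)
lemma M11: "refl2 a b (rsub (beta a b 1 (Suc j)) (beta a b 1 (Suc k))) = rsub (beta a b 2 j) (beta a b 2 k)"
  by (simp add: pv algebra_simps)
lemma M12: "refl1 a b (rsub (beta a b 2 (Suc j)) (beta a b 2 (Suc k))) = rsub (beta a b 1 j) (beta a b 1 k)"
  by (simp add: pv algebra_simps)



definition exc :: "nat \<Rightarrow> nat \<Rightarrow> nat \<Rightarrow> bool" where
  "exc i j k \<longleftrightarrow> (k = j + 2 \<and> (even j \<longleftrightarrow> even i)) \<or> (j = k + 2 \<and> (even k \<longleftrightarrow> even i))"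

context KM begin

lemma Sd: "rsub (beta a b 1 j) (rneg (beta a b 2 k)) \<in> roots a b"
proof (induction k arbitrary: j rule: less_induct)
  case (less k)
  show ?case
  proof (cases k)
    case 0 then show ?thesis using B3 by simp
  next
    case (Suc k')
    note k = Suc
    have s1: "rsub (beta a b 1 j) (rneg (beta a b 2 (Suc k'))) \<in> roots a b \<longleftrightarrow>
              rsub (beta a b 1 k') (rneg (beta a b 2 (Suc j))) \<in> roots a b"
      by (subst roots_refl1_iff[symmetric]) (simp only: M1)
    show ?thesis
    proof (cases k')
      case 0
      then show ?thesis using s1 B4 k by simp
    next
      case (Suc k'')
      have "rsub (beta a b 1 (Suc k'')) (rneg (beta a b 2 (Suc j))) \<in> roots a b \<longleftrightarrow>
            rsub (beta a b 1 (Suc (Suc j))) (rneg (beta a b 2 k'')) \<in> roots a b"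
        by (subst roots_refl2_iff[symmetric]) (simp only: M2)
      moreover have "rsub (beta a b 1 (Suc (Suc j))) (rneg (beta a b 2 k'')) \<in> roots a b"
        using less.IH[of k''] k Suc by simp
      ultimately show ?thesis using s1 k Suc by simp
    qed
  qed
qed

end

context KM begin
lemma Dd: "rsub (beta a b 1 j) (beta a b 2 k) \<in> roots a b \<longleftrightarrow> (b = 1 \<and> j = 1 \<and> k = 0)"
proof (induction k arbitrary: j rule: less_induct)
  case (less k)
  show ?case
  proof (cases k)
    case 0
    have "rsub (beta a b 1 j) (beta a b 2 0) \<in> roots a b \<longleftrightarrow>
          rsub (beta a b 2 0) (rneg (beta a b 2 (Suc j))) \<in> roots a b"
      by (subst roots_refl1_iff[symmetric]) (simp only: M5)
    then show ?thesis using B2[of "Suc j"] 0 by simp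
  next
    case (Suc k')
    note k = Suc
    have s1: "rsub (beta a b 1 j) (beta a b 2 (Suc k')) \<in> roots a b \<longleftrightarrow>
              rsub (beta a b 1 k') (beta a b 2 (Suc j)) \<in> roots a b"
      by (subst roots_refl1_iff[symmetric]) (simp only: M3 roots_rneg_iff)
    show ?thesis
    proof (cases k')
      case 0
      have "rsub (beta a b 1 0) (beta a b 2 (Suc j)) \<in> roots a b \<longleftrightarrow>
            rneg (rsub (beta a b 1 0) (rneg (beta a b 1 (Suc (Suc j))))) \<in> roots a b"
        by (subst roots_refl2_iff[symmetric]) (simp only: M6)
      then show ?thesis using s1 B1 k 0 by simp
    next
      case (Suc k'')
      have "rsub (beta a b 1 (Suc k'')) (beta a b 2 (Suc j)) \<in> roots a b \<longleftrightarrow>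
            rsub (beta a b 1 (Suc (Suc j))) (beta a b 2 k'') \<in> roots a b"
        by (subst roots_refl2_iff[symmetric]) (simp only: M4 roots_rneg_iff)
      moreover have "rsub (beta a b 1 (Suc (Suc j))) (beta a b 2 k'') \<notin> roots a b"
        using less.IH[of k''] k Suc by simp
      ultimately show ?thesis using s1 k Suc by simp
    qed
  qed
qed


end

context KM begin
lemma Tt_le: "j \<le> k \<Longrightarrow> i \<in> {1,2} \<Longrightarrow>
  rsub (beta a b i j) (rneg (beta a b i k)) \<in> roots a b \<longleftrightarrow> (b = 1 \<and> exc i j k)"
proof (induction j arbitrary: i k)
  case 0
  then consider "i = 1" | "i = 2" by auto
  then show ?case
  proof cases
    case 1 then show ?thesis using B1 by (simp add: exc_def)
  next
    case 2 then show ?thesis using B2[of k] by (auto simp: exc_def)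
  qed
next
  case (Suc j)
  then obtain k' where k: "k = Suc k'" "j \<le> k'" by (cases k) auto
  from Suc consider "i = 1" | "i = 2" by auto
  then show ?case
  proof cases
    case 1
    have "rsub (beta a b 1 (Suc j)) (rneg (beta a b 1 (Suc k'))) \<in> roots a b \<longleftrightarrow>
          rsub (beta a b 2 j) (rneg (beta a b 2 k')) \<in> roots a b"
      by (subst roots_refl2_iff[symmetric]) (simp only: M7)
    moreover have "exc 1 (Suc j) (Suc k') \<longleftrightarrow> exc 2 j k'" unfolding exc_def by auto
    ultimately show ?thesis using Suc.IH[of k' 2] k 1 by simp
  next
    case 2
    have "rsub (beta a b 2 (Suc j)) (rneg (beta a b 2 (Suc k'))) \<in> roots a b \<longleftrightarrow>
          rsub (beta a b 1 j) (rneg (beta a b 1 k')) \<in> roots a b"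
      by (subst roots_refl1_iff[symmetric]) (simp only: M8)
    moreover have "exc 2 (Suc j) (Suc k') \<longleftrightarrow> exc 1 j k'" unfolding exc_def by auto
    ultimately show ?thesis using Suc.IH[of k' 1] k 2 by simp
  qed
qed

lemma Tt: "i \<in> {1,2} \<Longrightarrow>
  rsub (beta a b i j) (rneg (beta a b i k)) \<in> roots a b \<longleftrightarrow> (b = 1 \<and> exc i j k)"
proof (cases "j \<le> k")
  case True then show "i \<in> {1,2} \<Longrightarrow> ?thesis" using Tt_le by simp
next
  case False
  assume i: "i \<in> {1,2}"
  have "rsub (beta a b i j) (rneg (beta a b i k)) = rsub (beta a b i k) (rneg (beta a b i j))"
    by (rule rsub_rneg_comm)
  moreover have "exc i j k \<longleftrightarrow> exc i k j" unfolding exc_def by auto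
  ultimately show ?thesis using Tt_le[of k j i] False i by simp
qed

end

context KM begin
lemma Ds_lt: "j < k \<Longrightarrow> i \<in> {1,2} \<Longrightarrow> rsub (beta a b i j) (beta a b i k) \<in> roots a b"
proof (induction j arbitrary: i k)
  case 0
  then obtain n where k: "k = Suc n" by (cases k) auto
  from 0 consider "i = 1" | "i = 2" by auto
  then show ?case
  proof cases
    case 1
    have "rsub (beta a b 1 0) (beta a b 1 (Suc n)) \<in> roots a b"
      by (subst roots_refl2_iff[symmetric]) (simp only: M9 roots_rneg_iff Sd)
    then show ?thesis using 1 k by simp
  next
    case 2
    have "rsub (beta a b 2 0) (beta a b 2 (Suc n)) \<in> roots a b"
      by (subst roots_refl1_iff[symmetric]) (simp only: M10 roots_rneg_iff Sd)
    then show ?thesis using 2 k by simp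
  qed
next
  case (Suc j)
  then obtain k' where k: "k = Suc k'" "j < k'" by (cases k) auto
  from Suc consider "i = 1" | "i = 2" by auto
  then show ?case
  proof cases
    case 1
    have "rsub (beta a b 1 (Suc j)) (beta a b 1 (Suc k')) \<in> roots a b"
      using Suc.IH[of k' 2] k by (subst roots_refl2_iff[symmetric]) (simp only: M11, simp)
    then show ?thesis using 1 k by simp
  next
    case 2
    have "rsub (beta a b 2 (Suc j)) (beta a b 2 (Suc k')) \<in> roots a b"
      using Suc.IH[of k' 1] k by (subst roots_refl1_iff[symmetric]) (simp only: M12, simp)
    then show ?thesis using 2 k by simp
  qed
qed

lemma Ds: "j \<noteq> k \<Longrightarrow> i \<in> {1,2} \<Longrightarrow> rsub (beta a b i j) (beta a b i k) \<in> roots a b"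
proof -
  assume jk: "j \<noteq> k" and i: "i \<in> {1,2}"
  show ?thesis
  proof (cases "j < k")
    case True then show ?thesis using Ds_lt i by simp
  next
    case False
    then have "k < j" using jk by simp
    then have "rsub (beta a b i k) (beta a b i j) \<in> roots a b" using Ds_lt i by simp
    then have "rneg (rsub (beta a b i j) (beta a b i k)) \<in> roots a b" by (simp only: rneg_rsub)
    then show ?thesis by simp
  qed
qed

end


lemma indep2:
  fixes x1 y1 x2 y2 :: int
  assumes "x1 * y2 \<noteq> x2 * y1"
  shows "independent {(real_of_int x1, real_of_int y1), (real_of_int x2, real_of_int y2)}"
proof -
  let ?U = "(real_of_int x1, real_of_int y1)" and ?W = "(real_of_int x2, real_of_int y2)"
  have W0: "?W \<noteq> 0" using assms by (auto simp: zero_prod_def)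
  have iW: "independent {?W}" using W0 by (simp add: independent_insert)
  have UW: "?U \<noteq> ?W" using assms by auto
  have "?U \<notin> span {?W}"
  proof
    assume "?U \<in> span {?W}"
    then obtain c where c: "?U = c *\<^sub>R ?W" by (auto simp: span_singleton)
    then have "real_of_int x1 = c * real_of_int x2" "real_of_int y1 = c * real_of_int y2" by auto
    then have "real_of_int (x1 * y2) = real_of_int (x2 * y1)" by simp
    then show False using assms by linarith
  qed
  then show ?thesis using iW UW by (simp add: independent_insert)
qed

lemma indep1:
  fixes x1 y1 :: int
  assumes "(x1, y1) \<noteq> (0,0)"
  shows "independent {(real_of_int x1, real_of_int y1)}"
  using assms by (simp add: independent_insert zero_prod_def)



lemma prim_parallel:
  fixes x1 y1 x2 y2 :: int
  assumes c1: "coprime x1 y1" and c2: "coprime x2 y2" and p: "x1 * y2 = x2 * y1"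
  shows "(x1, y1) = (x2, y2) \<or> (x1, y1) = (-x2, -y2)"
proof -
  have "x1 dvd x1 * y2" by (rule dvd_triv_left)
  then have "x1 dvd x2 * y1" by (simp only: p)
  then have d1: "x1 dvd x2" using c1 coprime_dvd_mult_left_iff by blast
  have "x2 dvd x2 * y1" by (rule dvd_triv_left)
  then have "x2 dvd x1 * y2" by (simp only: p)
  then have d2: "x2 dvd x1" using c2 coprime_dvd_mult_left_iff by blast
  have "y1 dvd x2 * y1" by (rule dvd_triv_right)
  then have "y1 dvd x1 * y2" by (simp only: p)
  then have d3: "y1 dvd y2" using c1 coprime_dvd_mult_right_iff coprime_commute by blast
  have "y2 dvd x1 * y2" by (rule dvd_triv_right)
  then have "y2 dvd x2 * y1" by (simp only: p)
  then have d4: "y2 dvd y1" using c2 coprime_dvd_mult_right_iff coprime_commute by blast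
  have ax: "\<bar>x1\<bar> = \<bar>x2\<bar>" using d1 d2 by (rule zdvd_antisym_abs)
  have ay: "\<bar>y1\<bar> = \<bar>y2\<bar>" using d3 d4 by (rule zdvd_antisym_abs)
  show ?thesis
  proof (cases "x1 = 0")
    case True
    then have "x2 = 0" using ax by simp
    then show ?thesis using True ay by (auto simp: abs_eq_iff)
  next
    case False
    from ax have "x2 = x1 \<or> x2 = - x1" by (auto simp: abs_eq_iff)
    then show ?thesis
    proof
      assume e: "x2 = x1"
      then have "x1 * y2 = x1 * y1" using p by simp
      then have "y2 = y1" using False by simp
      then show ?thesis using e by simp
    next
      assume e: "x2 = - x1"
      then have "x1 * y2 = x1 * (- y1)" using p by simp
      then have "x1 * y2 = x1 * (- y1)" by simp
      then have "y2 = - y1" using False mult_cancel_left by blast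
      then show ?thesis using e by simp
    qed
  qed
qed



definition sg :: "bool \<Rightarrow> int \<times> int \<Rightarrow> int \<times> int" where
  "sg e v = (if e then v else rneg v)"

lemma real_sg: "v \<in> real_roots a b \<Longrightarrow> \<exists>e i j. i \<in> {1,2} \<and> v = sg e (beta a b i j)"
proof -
  assume "v \<in> real_roots a b"
  then obtain i j where "i \<in> {1,2}" "v = beta a b i j \<or> v = rneg (beta a b i j)"
    unfolding real_eq_PM PM_def by blast
  then show ?thesis unfolding sg_def by (metis (full_types))
qed

lemma rsub_self: "rsub v v = (0,0)" by (cases v) (simp add: rsub_eq)

lemma pi_rneg: "pi_system a b S \<Longrightarrow> pi_system a b (rneg ` S)"
  unfolding pi_system_def by (auto simp: rsub_rneg_rneg)

lemma pi2:
  assumes "(0,0) \<notin> roots a b"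
  shows "pi_system a b {u, w} \<longleftrightarrow> u \<in> real_roots a b \<and> w \<in> real_roots a b \<and> rsub u w \<notin> roots a b"
proof -
  have "rsub w u \<in> roots a b \<longleftrightarrow> rsub u w \<in> roots a b"
    by (subst roots_rneg_iff[symmetric]) (simp only: rneg_rsub)
  then show ?thesis using assms unfolding pi_system_def by (auto simp: rsub_self)
qed

lemma exc_iff: "exc i j k \<longleftrightarrow> (\<exists>s. {j, k} = {s, s + 2} \<and> s mod 2 = i mod 2)"
proof -
  have par: "s mod 2 = i mod 2 \<longleftrightarrow> (even s \<longleftrightarrow> even i)" for s :: nat
    by (cases "even s"; cases "even i") (simp_all add: even_iff_mod_2_eq_zero odd_iff_mod_2_eq_one)
  have dbl: "{j, k} = {s, s + 2} \<longleftrightarrow> (j = s \<and> k = s + 2) \<or> (j = s + 2 \<and> k = s)" for s :: nat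
    by (auto simp: doubleton_eq_iff)
  show ?thesis
  proof
    assume "exc i j k"
    then show "\<exists>s. {j, k} = {s, s + 2} \<and> s mod 2 = i mod 2"
      unfolding exc_def
    proof
      assume h: "k = j + 2 \<and> (even j \<longleftrightarrow> even i)"
      then show ?thesis using dbl[of j] par[of j] by blast
    next
      assume h: "j = k + 2 \<and> (even k \<longleftrightarrow> even i)"
      then show ?thesis using dbl[of k] par[of k] by blast
    qed
  next
    assume "\<exists>s. {j, k} = {s, s + 2} \<and> s mod 2 = i mod 2"
    then obtain s where s: "{j, k} = {s, s + 2}" "s mod 2 = i mod 2" by blast
    then show "exc i j k" using dbl[of s] par[of s] unfolding exc_def by auto
  qed
qed



context KM begin

lemma zr: "(0,0) \<notin> roots a b" using zero_notin_roots apos b1 by simp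

lemma compat:
  assumes i: "i \<in> {1,2}" and l: "l \<in> {1,2}"
    and ne: "sg e (beta a b i j) \<noteq> sg f (beta a b l k)"
    and nr: "rsub (sg e (beta a b i j)) (sg f (beta a b l k)) \<notin> roots a b"
  shows "(e = f \<and> i \<noteq> l) \<or> (e \<noteq> f \<and> i = l)"
proof (rule ccontr)
  assume "\<not> ?thesis"
  then have c: "(e = f \<and> i = l) \<or> (e \<noteq> f \<and> i \<noteq> l)" by blast
  then show False
  proof
    assume h: "e = f \<and> i = l"
    then have "j \<noteq> k" using ne by auto
    then have r: "rsub (beta a b i j) (beta a b i k) \<in> roots a b" using Ds i by simp
    show False
    proof (cases e)
      case True then show False using nr r h by (simp add: sg_def)
    next
      case False
      then have "rsub (sg e (beta a b i j)) (sg f (beta a b l k)) = rneg (rsub (beta a b i j) (beta a b i k))"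
        using h by (simp add: sg_def rsub_rneg_rneg)
      then show False using nr r by simp
    qed
  next
    assume h: "e \<noteq> f \<and> i \<noteq> l"
    then have il: "(i = 1 \<and> l = 2) \<or> (i = 2 \<and> l = 1)" using i l by auto
    have "rsub (sg e (beta a b i j)) (sg f (beta a b l k)) \<in> roots a b"
    proof (cases e)
      case True
      then have f: "\<not> f" using h by simp
      from il show ?thesis
      proof
        assume "i = 1 \<and> l = 2"
        then show ?thesis using True f Sd[of j k] by (simp add: sg_def)
      next
        assume il2: "i = 2 \<and> l = 1"
        have "rsub (beta a b 2 j) (rneg (beta a b 1 k)) = rsub (beta a b 1 k) (rneg (beta a b 2 j))"
          by (rule rsub_rneg_comm)
        then show ?thesis using il2 True f Sd[of k j] by (simp add: sg_def)
      qed
    next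
      case False
      then have f: "f" using h by simp
      from il show ?thesis
      proof
        assume il1: "i = 1 \<and> l = 2"
        have "rsub (rneg (beta a b 1 j)) (beta a b 2 k) = rneg (rsub (beta a b 1 j) (rneg (beta a b 2 k)))"
          by (rule rsub_rneg_left)
        then show ?thesis using il1 False f Sd[of j k] by (simp add: sg_def)
      next
        assume il2: "i = 2 \<and> l = 1"
        have "rsub (rneg (beta a b 2 j)) (beta a b 1 k) = rneg (rsub (beta a b 2 j) (rneg (beta a b 1 k)))"
          by (rule rsub_rneg_left)
        moreover have "rsub (beta a b 2 j) (rneg (beta a b 1 k)) = rsub (beta a b 1 k) (rneg (beta a b 2 j))"
          by (rule rsub_rneg_comm)
        ultimately show ?thesis using il2 False f Sd[of k j] by (simp add: sg_def)
      qed
    qed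
    then show False using nr by simp
  qed
qed

lemma pi_two:
  assumes pi: "pi_system a b S" and v: "v \<in> S" and w: "w \<in> S" and vw: "v \<noteq> w"
  shows "S = {v, w} \<and> (\<exists>e i j f l k. i \<in> {1,2} \<and> l \<in> {1,2} \<and> v = sg e (beta a b i j)
           \<and> w = sg f (beta a b l k) \<and> ((e = f \<and> i \<noteq> l) \<or> (e \<noteq> f \<and> i = l)))"
proof -
  have real: "S \<subseteq> real_roots a b" and nr: "\<And>x y. x \<in> S \<Longrightarrow> y \<in> S \<Longrightarrow> rsub x y \<notin> roots a b"
    using pi unfolding pi_system_def by auto
  obtain e i j where ei: "i \<in> {1,2}" "v = sg e (beta a b i j)" using real_sg[of v a b] real v by blast
  obtain f l k where fl: "l \<in> {1,2}" "w = sg f (beta a b l k)" using real_sg[of w a b] real w by blast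
  have cvw: "(e = f \<and> i \<noteq> l) \<or> (e \<noteq> f \<and> i = l)"
    using compat[OF ei(1) fl(1)] ei fl vw nr[OF v w] by simp
  have "S \<subseteq> {v, w}"
  proof
    fix u assume u: "u \<in> S"
    show "u \<in> {v, w}"
    proof (rule ccontr)
      assume nu: "u \<notin> {v, w}"
      obtain g m n where gm: "m \<in> {1,2}" "u = sg g (beta a b m n)" using real_sg[of u a b] real u by blast
      have cuv: "(g = e \<and> m \<noteq> i) \<or> (g \<noteq> e \<and> m = i)"
        using compat[OF gm(1) ei(1)] ei gm nu nr[OF u v] by auto
      have cuw: "(g = f \<and> m \<noteq> l) \<or> (g \<noteq> f \<and> m = l)"
        using compat[OF gm(1) fl(1)] fl gm nu nr[OF u w] by auto
      show False using cvw cuv cuw ei(1) fl(1) gm(1) by auto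
    qed
  qed
  then have "S = {v, w}" using v w by auto
  then show ?thesis using ei fl cvw by blast
qed

end

context KM begin
lemma beta_nonneg: "fst (beta a b i j) \<ge> 0 \<and> snd (beta a b i j) \<ge> 0"
  using cd_inv[of j] cd_inv[of "Suc j"] by (simp add: beta_def)

lemma part1:
  assumes pi: "pi_system a b S" and ex: "\<exists>v\<in>S. \<exists>w\<in>S. v \<noteq> w"
  shows "(\<exists>j k. S = {beta a b 1 j, beta a b 2 k} \<and> pi_system a b {beta a b 1 j, beta a b 2 k})
      \<or> (\<exists>j k. S = {rneg (beta a b 1 j), rneg (beta a b 2 k)}
               \<and> pi_system a b {beta a b 1 j, beta a b 2 k})
      \<or> (\<exists>i\<in>{1,2}. \<exists>j k. S = {beta a b i j, rneg (beta a b i k)})"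
proof -
  obtain v w where vw: "v \<in> S" "w \<in> S" "v \<noteq> w" using ex by blast
  obtain e i j f l k where S: "S = {v, w}" and h: "i \<in> {1,2}" "l \<in> {1,2}" "v = sg e (beta a b i j)"
      "w = sg f (beta a b l k)" "(e = f \<and> i \<noteq> l) \<or> (e \<noteq> f \<and> i = l)"
    using pi_two[OF pi vw] by blast
  have pr: "pi_system a b {x, y}" if "pi_system a b {rneg x, rneg y}" for x y
  proof -
    have "rneg ` {rneg x, rneg y} = {x, y}" by simp
    then show ?thesis using pi_rneg[OF that] by simp
  qed
  consider "e = f" "i = 1" "l = 2" | "e = f" "i = 2" "l = 1" | "e \<noteq> f" "i = l"
    using h by auto
  then show ?thesis
  proof cases
    case 1
    show ?thesis
    proof (cases e)
      case True
      then have "S = {beta a b 1 j, beta a b 2 k}" using S h 1 by (simp add: sg_def)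
      then show ?thesis using pi by blast
    next
      case False
      then have "S = {rneg (beta a b 1 j), rneg (beta a b 2 k)}" using S h 1 by (simp add: sg_def)
      moreover then have "pi_system a b {beta a b 1 j, beta a b 2 k}" using pi pr by simp
      ultimately show ?thesis by blast
    qed
  next
    case 2
    show ?thesis
    proof (cases e)
      case True
      then have "S = {beta a b 1 k, beta a b 2 j}" using S h 2 by (auto simp: sg_def)
      then show ?thesis using pi by blast
    next
      case False
      then have "S = {rneg (beta a b 1 k), rneg (beta a b 2 j)}" using S h 2 by (auto simp: sg_def)
      moreover then have "pi_system a b {beta a b 1 k, beta a b 2 j}" using pi pr by simp
      ultimately show ?thesis by blast
    qed
  next
    case 3
    show ?thesis
    proof (cases e)
      case True
      then have "S = {beta a b i j, rneg (beta a b i k)}" using S h 3 by (simp add: sg_def)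
      then show ?thesis using h(1) by blast
    next
      case False
      then have "S = {beta a b i k, rneg (beta a b i j)}" using S h 3 by (auto simp: sg_def)
      then show ?thesis using h(1) by blast
    qed
  qed
qed

lemma part3:
  assumes pi: "pi_system a b S"
  shows "finite S \<and> card S \<le> 2 \<and>
        (lin_indep S \<or> (\<exists>v\<in>positive_real_roots a b. S = {v, rneg v}))"
proof (cases "\<exists>v\<in>S. \<exists>w\<in>S. v \<noteq> w")
  case True
  then obtain v w where vw: "v \<in> S" "w \<in> S" "v \<noteq> w" by blast
  obtain e i j f l k where S: "S = {v, w}" and h: "i \<in> {1,2}" "l \<in> {1,2}" "v = sg e (beta a b i j)"
      "w = sg f (beta a b l k)"
    using pi_two[OF pi vw] by blast
  have real: "v \<in> real_roots a b" "w \<in> real_roots a b" using pi vw unfolding pi_system_def by auto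
  have fc: "finite S \<and> card S \<le> 2" using S by (simp add: card_insert_if)
  show ?thesis
  proof (cases "w = rneg v")
    case True
    show ?thesis
    proof (cases e)
      case e: True
      have "v \<in> positive_real_roots a b"
        using real beta_nonneg[of i j] h e by (simp add: positive_real_roots_def sg_def)
      then show ?thesis using fc S True by blast
    next
      case e: False
      have "w = beta a b i j" using True h e by (simp add: sg_def)
      then have "w \<in> positive_real_roots a b"
        using real beta_nonneg[of i j] by (simp add: positive_real_roots_def)
      moreover have "S = {w, rneg w}" using S True by auto
      ultimately show ?thesis using fc by blast
    qed
  next
    case False
    obtain x1 y1 where v: "v = (x1, y1)" by (cases v)
    obtain x2 y2 where w: "w = (x2, y2)" by (cases w)
    have c: "coprime x1 y1" "coprime x2 y2" using coprime_real real v w by fastforce+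
    have "x1 * y2 \<noteq> x2 * y1"
    proof
      assume "x1 * y2 = x2 * y1"
      then have "(x1, y1) = (x2, y2) \<or> (x1, y1) = (-x2, -y2)" using prim_parallel c by blast
      then show False using vw(3) False v w by (auto simp: rneg_eq)
    qed
    then have "lin_indep {v, w}" unfolding lin_indep_def using indep2 v w by simp
    then show ?thesis using fc S by blast
  qed
next
  case False
  then have "S = {} \<or> (\<exists>v. S = {v})" by blast
  then show ?thesis
  proof
    assume "S = {}" then show ?thesis by (simp add: lin_indep_def independent_empty)
  next
    assume "\<exists>v. S = {v}"
    then obtain v where S: "S = {v}" by blast
    have "v \<in> real_roots a b" using pi S unfolding pi_system_def by auto
    then have "v \<noteq> (0,0)" using zr by (auto simp: roots_def)
    then have "lin_indep S" unfolding lin_indep_def S using indep1[of "fst v" "snd v"] by simp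
    then show ?thesis using S by simp
  qed
qed

lemma part2: "b = 1 \<Longrightarrow> pi_system a b {beta a b 1 j, beta a b 2 k} \<longleftrightarrow> (j, k) \<noteq> (1, 0)"
  using pi2[OF zr] beta_real[of 1 a b j] beta_real[of 2 a b k] Dd[of j k] by auto

lemma part4: "b \<ge> 2 \<Longrightarrow> i \<in> {1,2} \<Longrightarrow> pi_system a b {beta a b i j, rneg (beta a b i k)}"
  using pi2[OF zr] beta_real[of i a b j] beta_real[of i a b k] Tt[of i j k] by auto

lemma part5: "b = 1 \<Longrightarrow> i \<in> {1,2} \<Longrightarrow> pi_system a b {beta a b i j, rneg (beta a b i k)} \<longleftrightarrow>
        \<not> (\<exists>s. {j, k} = {s, s + 2} \<and> s mod 2 = i mod 2)"
  using pi2[OF zr] beta_real[of i a b j] beta_real[of i a b k] Tt[of i j k] exc_iff[of i j k] by auto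

end



theorem theorem4p1:
  fixes a b :: int
  assumes "b \<le> a" and "1 \<le> b" and "b \<ge> 2 \<or> (b = 1 \<and> a \<ge> 5)"
  shows
    "(\<forall>S. pi_system a b S \<and> (\<exists>v\<in>S. \<exists>w\<in>S. v \<noteq> w) \<longrightarrow>
        (\<exists>j k. S = {beta a b 1 j, beta a b 2 k} \<and> pi_system a b {beta a b 1 j, beta a b 2 k})
      \<or> (\<exists>j k. S = {rneg (beta a b 1 j), rneg (beta a b 2 k)}
               \<and> pi_system a b {beta a b 1 j, beta a b 2 k})
      \<or> (\<exists>i\<in>{1,2}. \<exists>j k. S = {beta a b i j, rneg (beta a b i k)}))
   \<and> (b = 1 \<longrightarrow> (\<forall>j k. pi_system a b {beta a b 1 j, beta a b 2 k} \<longleftrightarrow> (j, k) \<noteq> (1, 0)))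
   \<and> (\<forall>S. pi_system a b S \<longrightarrow>
        finite S \<and> card S \<le> 2 \<and>
        (lin_indep S \<or> (\<exists>v\<in>positive_real_roots a b. S = {v, rneg v})))
   \<and> (b \<ge> 2 \<longrightarrow> (\<forall>i\<in>{1,2}. \<forall>j k. pi_system a b {beta a b i j, rneg (beta a b i k)}))
   \<and> (b = 1 \<longrightarrow> (\<forall>i\<in>{1,2}. \<forall>j k. pi_system a b {beta a b i j, rneg (beta a b i k)} \<longleftrightarrow>
        \<not> (\<exists>s. {j, k} = {s, s + 2} \<and> s mod 2 = i mod 2)))"
proof -
  interpret KM a b by unfold_locales (use assms in auto)
  show ?thesis
  proof (intro conjI)
    show "\<forall>S. pi_system a b S \<and> (\<exists>v\<in>S. \<exists>w\<in>S. v \<noteq> w) \<longrightarrow>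
        (\<exists>j k. S = {beta a b 1 j, beta a b 2 k} \<and> pi_system a b {beta a b 1 j, beta a b 2 k})
      \<or> (\<exists>j k. S = {rneg (beta a b 1 j), rneg (beta a b 2 k)}
               \<and> pi_system a b {beta a b 1 j, beta a b 2 k})
      \<or> (\<exists>i\<in>{1,2}. \<exists>j k. S = {beta a b i j, rneg (beta a b i k)})"
      using part1 by blast
    show "b = 1 \<longrightarrow> (\<forall>j k. pi_system a b {beta a b 1 j, beta a b 2 k} \<longleftrightarrow> (j, k) \<noteq> (1, 0))"
      using part2 by blast
    show "\<forall>S. pi_system a b S \<longrightarrow>
        finite S \<and> card S \<le> 2 \<and>
        (lin_indep S \<or> (\<exists>v\<in>positive_real_roots a b. S = {v, rneg v}))"
      using part3 by blast
    show "b \<ge> 2 \<longrightarrow> (\<forall>i\<in>{1,2}. \<forall>j k. pi_system a b {beta a b i j, rneg (beta a b i k)})"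
      using part4 by blast
    show "b = 1 \<longrightarrow> (\<forall>i\<in>{1,2}. \<forall>j k. pi_system a b {beta a b i j, rneg (beta a b i k)} \<longleftrightarrow>
        \<not> (\<exists>s. {j, k} = {s, s + 2} \<and> s mod 2 = i mod 2))"
      using part5 by blast
  qed
qed


end
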